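(* Let $\kappa=(a,b,0,0)\in[-2,2]^4$. Then each level set $X_\kappa(x)\subset E_\kappa$ is an ellipse (possibly degenerate) centered at $(x,0,0)$. Consequently $Y_\kappa(0)$ and $Z_\kappa(0)$ intersect every ellipse $X_\kappa(x)$.
   Context: Let $M$ be a four-holed sphere with $\pi_1(M)=\langle A,B,C,D:ABCD=I\rangle$, $A,B,C,D$ the boundary classes, and set $X=AB$, $Y=BC$, $Z=CA$. For $\kappa=(a,b,c,d)\in[-2,2]^4$, $E_\kappa\subset\mathbb R^3$ is the set of triples $(\operatorname{tr}\rho(X),\operatorname{tr}\rho(Y),\operatorname{tr}\rho(Z))$ for $[\rho]\in\operatorname{Hom}(\pi_1(M),\mathrm{SU}(2))/\mathrm{SU}(2)$ with boundary traces $(\operatorname{tr}\rho(A),\operatorname{tr}\rho(B),\operatorname{tr}\rho(C),\operatorname{tr}\rho(D))=\kappa$; it lies in the surface $x^2+y^2+z^2+xyz=(ab+cd)x+(ad+bc)y+(ac+bd)z-(a^2+b^2+c^2+d^2+abcd-4)$. The level sets are $X_\kappa(x)=\{(x',y',z')\in E_\kappa:x'=x\}$, $Y_\kappa(y)=\{(x',y',z')\in E_\kappa:y'=y\}$, $Z_\kappa(z)=\{(x',y',z')\in E_\kappa:z'=z\}$. *)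

theory Defs
  imports "HOL-Analysis.Analysis"
begin

definition conj_transpose :: "complex^'n^'n \<Rightarrow> complex^'n^'n" where
  "conj_transpose M = (\<chi> i j. cnj (M $ j $ i))"

definition SU2 :: "(complex^2^2) set" where
  "SU2 = {M. M ** conj_transpose M = mat 1 \<and> det M = 1}"

text \<open>E_kappa: trace triples (tr rho(AB), tr rho(BC), tr rho(CA)) over representations
  rho of <A,B,C,D | ABCD = I> into SU(2) with boundary traces kappa = (a,b,c,d).
  A representation is given by the images A,B,C,D of the generators.\<close>
definition E_kappa :: "real \<times> real \<times> real \<times> real \<Rightarrow> (real \<times> real \<times> real) set" where
  "E_kappa \<kappa> = (case \<kappa> of (a, b, c, d) \<Rightarrow>
     {(x, y, z). \<exists>A\<in>SU2. \<exists>B\<in>SU2. \<exists>C\<in>SU2. \<exists>D\<in>SU2.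
        A ** B ** C ** D = mat 1 \<and>
        trace A = complex_of_real a \<and> trace B = complex_of_real b \<and>
        trace C = complex_of_real c \<and> trace D = complex_of_real d \<and>
        trace (A ** B) = complex_of_real x \<and> trace (B ** C) = complex_of_real y \<and>
        trace (C ** A) = complex_of_real z})"

definition X_level :: "real \<times> real \<times> real \<times> real \<Rightarrow> real \<Rightarrow> (real \<times> real \<times> real) set" where
  "X_level \<kappa> x = {p \<in> E_kappa \<kappa>. fst p = x}"

definition Y_level :: "real \<times> real \<times> real \<times> real \<Rightarrow> real \<Rightarrow> (real \<times> real \<times> real) set" where
  "Y_level \<kappa> y = {p \<in> E_kappa \<kappa>. fst (snd p) = y}"

definition Z_level :: "real \<times> real \<times> real \<times> real \<Rightarrow> real \<Rightarrow> (real \<times> real \<times> real) set" where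
  "Z_level \<kappa> z = {p \<in> E_kappa \<kappa>. snd (snd p) = z}"

text \<open>A (possibly degenerate) ellipse centered at c: the image of the unit circle under
  an affine map t \<mapsto> c + cos t u + sin t v (u, v arbitrary, possibly dependent or zero,
  so points and segments are the degenerate cases).\<close>
definition ellipse_centered :: "(real \<times> real \<times> real) set \<Rightarrow> real \<times> real \<times> real \<Rightarrow> bool" where
  "ellipse_centered S c \<longleftrightarrow>
     (\<exists>u v. S = (\<lambda>t. c + cos t *\<^sub>R u + sin t *\<^sub>R v) ` UNIV)"

end

theory Submission
  imports Defs
begin

definition mk :: "real \<Rightarrow> real^3 \<Rightarrow> complex^2^2" where
"mk q v = (\<chi> i j. if i = 1 then (if j = 1 then Complex q (v$1) else Complex (v$2) (v$3))
   else (if j = 1 then Complex (-(v$2)) (v$3) else Complex q (-(v$1))))"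
lemma mk_nth[simp]: "mk q v $ 1 $ 1 = Complex q (v$1)" "mk q v $ 1 $ 2 = Complex (v$2) (v$3)"
  "mk q v $ 2 $ 1 = Complex (-(v$2)) (v$3)" "mk q v $ 2 $ 2 = Complex q (-(v$1))"
  by (simp_all add: mk_def)
lemma mk_mult: "mk a0 x ** mk b0 y = mk (a0*b0 - x \<bullet> y) (a0 *\<^sub>R y + b0 *\<^sub>R x + cross3 x y)"
  by (simp add: vec_eq_iff forall_2 matrix_matrix_mult_def sum_2 cross3_simps complex_eq_iff)
lemma trace_mk: "trace (mk q v) = complex_of_real (2*q)"
  by (simp add: trace_def sum_2 complex_eq_iff)
lemma mk_mat1: "q\<^sup>2 + v \<bullet> v = 1 \<Longrightarrow> mk q v ** mk q (-v) = mat 1"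
  by (simp add: mk_mult) (simp add: vec_eq_iff forall_2 mat_def complex_eq_iff power2_eq_square)
lemma ct_mk: "conj_transpose (mk q v) = mk q (-v)"
  by (simp add: conj_transpose_def vec_eq_iff forall_2 complex_eq_iff)
lemma det_mk: "det (mk q v) = complex_of_real (q\<^sup>2 + v \<bullet> v)"
  by (simp add: det_2 inner_vec_def sum_3 complex_eq_iff power2_eq_square)
lemma mk_SU2: "q\<^sup>2 + v \<bullet> v = 1 \<Longrightarrow> mk q v \<in> SU2"
  by (simp add: SU2_def ct_mk mk_mat1 det_mk)

definition qv :: "complex^2^2 \<Rightarrow> real^3" where
 "qv M = vector [Im (M$1$1), Re (M$1$2), Im (M$1$2)]"
definition q0 :: "complex^2^2 \<Rightarrow> real" where "q0 M = Re (M$1$1)"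

lemma SU2_mk: assumes "M \<in> SU2" shows "M = mk (q0 M) (qv M)" "(q0 M)\<^sup>2 + qv M \<bullet> qv M = 1"
proof -
  define p where "p = M$1$1"
  define q where "q = M$1$2"
  define r where "r = M$2$1"
  define s where "s = M$2$2"
  have e: "M ** conj_transpose M = mat 1" and d: "det M = 1" using assms by (auto simp: SU2_def)
  have e1: "p * cnj p + q * cnj q = 1" using arg_cong[OF e, of "\<lambda>N. N$1$1"]
    by (simp add: matrix_matrix_mult_def sum_2 conj_transpose_def mat_def p_def q_def)
  have e2: "p * cnj r + q * cnj s = 0" using arg_cong[OF e, of "\<lambda>N. N$1$2"]
    by (simp add: matrix_matrix_mult_def sum_2 conj_transpose_def mat_def p_def q_def r_def s_def)
  have d1: "p * s - q * r = 1" using d by (simp add: det_2 p_def q_def r_def s_def)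
  have e2': "cnj p * r + cnj q * s = 0" using arg_cong[OF e2, of cnj] by (simp add: mult.commute)
  have "s - cnj p = s * (p * cnj p + q * cnj q) - cnj p * (p * s - q * r)" using e1 d1 by simp
  also have "\<dots> = q * (cnj p * r + cnj q * s)" by algebra
  finally have hs: "s = cnj p" using e2' by simp
  have "r + cnj q = r * (p * cnj p + q * cnj q) + cnj q * (p * s - q * r)" using e1 d1 by simp
  also have "\<dots> = p * (cnj p * r + cnj q * s)" by algebra
  also have "\<dots> = 0" using e2' by simp
  finally have hr: "r = - cnj q" by (simp add: eq_neg_iff_add_eq_0)
  show "M = mk (q0 M) (qv M)"
    using hs hr by (simp add: vec_eq_iff forall_2 q0_def qv_def p_def q_def r_def s_def complex_eq_iff)
  show "(q0 M)\<^sup>2 + qv M \<bullet> qv M = 1" using arg_cong[OF e1, of Re]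
    by (simp add: q0_def qv_def p_def q_def inner_vec_def sum_3 power2_eq_square)
qed

lemma quat_norm: "(a0*b0 - x \<bullet> y)\<^sup>2 + (a0 *\<^sub>R y + b0 *\<^sub>R x + cross3 x y) \<bullet> (a0 *\<^sub>R y + b0 *\<^sub>R x + cross3 x y)
   = (a0\<^sup>2 + x \<bullet> x) * (b0\<^sup>2 + y \<bullet> y)"
  by (simp add: inner_vec_def sum_3 cross3_def power2_eq_square) algebra

lemma E_iff: "(x, y, z) \<in> E_kappa (a, b, 0, 0) \<longleftrightarrow>
  (\<exists>\<alpha> \<beta> c. (a/2)\<^sup>2 + \<alpha> \<bullet> \<alpha> = 1 \<and> (b/2)\<^sup>2 + \<beta> \<bullet> \<beta> = 1 \<and> c \<bullet> c = 1 \<and>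
     x = 2*((a/2)*(b/2) - \<alpha> \<bullet> \<beta>) \<and> y = -2*(\<beta> \<bullet> c) \<and> z = -2*(c \<bullet> \<alpha>) \<and>
     ((a/2) *\<^sub>R \<beta> + (b/2) *\<^sub>R \<alpha> + cross3 \<alpha> \<beta>) \<bullet> c = 0)" (is "?L \<longleftrightarrow> ?R")
proof
  assume ?L
  then obtain A B C D where ABCD: "A \<in> SU2" "B \<in> SU2" "C \<in> SU2" "D \<in> SU2"
    "A ** B ** C ** D = mat 1" "trace A = complex_of_real a" "trace B = complex_of_real b"
    "trace C = 0" "trace D = 0" "trace (A ** B) = complex_of_real x"
    "trace (B ** C) = complex_of_real y" "trace (C ** A) = complex_of_real z"
    by (auto simp: E_kappa_def)
  define \<alpha> where "\<alpha> = qv A"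
  define \<beta> where "\<beta> = qv B"
  define c where "c = qv C"
  have A: "A = mk (a/2) \<alpha>" and nA: "(a/2)\<^sup>2 + \<alpha> \<bullet> \<alpha> = 1"
  proof -
    have "complex_of_real (2 * q0 A) = trace A" using SU2_mk(1)[OF ABCD(1)] by (metis trace_mk)
    then have "2 * q0 A = Re (trace A)" by (metis Re_complex_of_real)
    then have "q0 A = a/2" using ABCD(6) by simp
    then show "A = mk (a/2) \<alpha>" "(a/2)\<^sup>2 + \<alpha> \<bullet> \<alpha> = 1" using SU2_mk[OF ABCD(1)] by (auto simp: \<alpha>_def)
  qed
  have B: "B = mk (b/2) \<beta>" and nB: "(b/2)\<^sup>2 + \<beta> \<bullet> \<beta> = 1"
  proof -
    have "complex_of_real (2 * q0 B) = trace B" using SU2_mk(1)[OF ABCD(2)] by (metis trace_mk)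
    then have "2 * q0 B = Re (trace B)" by (metis Re_complex_of_real)
    then have "q0 B = b/2" using ABCD(7) by simp
    then show "B = mk (b/2) \<beta>" "(b/2)\<^sup>2 + \<beta> \<bullet> \<beta> = 1" using SU2_mk[OF ABCD(2)] by (auto simp: \<beta>_def)
  qed
  have C: "C = mk 0 c" and nC: "c \<bullet> c = 1"
  proof -
    have "complex_of_real (2 * q0 C) = trace C" using SU2_mk(1)[OF ABCD(3)] by (metis trace_mk)
    then have "2 * q0 C = Re (trace C)" by (metis Re_complex_of_real)
    then have "q0 C = 0" using ABCD(8) by simp
    then show "C = mk (0) c" "c \<bullet> c = 1" using SU2_mk[OF ABCD(3)] by (auto simp: c_def)
  qed
  have DD: "D ** conj_transpose D = mat 1" using ABCD(4) by (simp add: SU2_def)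
  have "A ** B ** C = A ** B ** C ** (D ** conj_transpose D)" using DD by simp
  also have "\<dots> = conj_transpose D" using ABCD(5) by (simp add: matrix_mul_assoc)
  finally have "trace (A ** B ** C) = trace (conj_transpose D)" by simp
  also have "\<dots> = cnj (trace D)" by (simp add: trace_def conj_transpose_def sum_2)
  finally have t3: "trace (A ** B ** C) = 0" using ABCD(9) by simp
  have "complex_of_real x = complex_of_real (2*((a/2)*(b/2) - \<alpha> \<bullet> \<beta>))"
    unfolding ABCD(10)[symmetric] by (simp only: A B mk_mult trace_mk)
  then have x: "x = 2*((a/2)*(b/2) - \<alpha> \<bullet> \<beta>)" by (simp only: of_real_eq_iff)
  have "complex_of_real y = complex_of_real (2*((b/2)*0 - \<beta> \<bullet> c))"
    unfolding ABCD(11)[symmetric] by (simp only: C B mk_mult trace_mk)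
  then have y: "y = -2*(\<beta> \<bullet> c)" by (simp only: of_real_eq_iff) simp
  have "complex_of_real z = complex_of_real (2*(0*(a/2) - c \<bullet> \<alpha>))"
    unfolding ABCD(12)[symmetric] by (simp only: C A mk_mult trace_mk)
  then have z: "z = -2*(c \<bullet> \<alpha>)" by (simp only: of_real_eq_iff) simp
  have "trace (A ** B ** C) = complex_of_real (2*(((a/2)*(b/2) - \<alpha> \<bullet> \<beta>)*0 - ((a/2) *\<^sub>R \<beta> + (b/2) *\<^sub>R \<alpha> + cross3 \<alpha> \<beta>) \<bullet> c))"
    by (simp only: C A B mk_mult trace_mk)
  then have p: "((a/2) *\<^sub>R \<beta> + (b/2) *\<^sub>R \<alpha> + cross3 \<alpha> \<beta>) \<bullet> c = 0" using t3 by simp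
  show ?R using nA nB nC x y z p by blast
next
  assume ?R
  then obtain \<alpha> \<beta> c where h: "(a/2)\<^sup>2 + \<alpha> \<bullet> \<alpha> = 1" "(b/2)\<^sup>2 + \<beta> \<bullet> \<beta> = 1" "c \<bullet> c = 1"
     "x = 2*((a/2)*(b/2) - \<alpha> \<bullet> \<beta>)" "y = -2*(\<beta> \<bullet> c)" "z = -2*(c \<bullet> \<alpha>)"
     "((a/2) *\<^sub>R \<beta> + (b/2) *\<^sub>R \<alpha> + cross3 \<alpha> \<beta>) \<bullet> c = 0" by blast
  define p0 where "p0 = (a/2)*(b/2) - \<alpha> \<bullet> \<beta>"
  define pv where "pv = (a/2) *\<^sub>R \<beta> + (b/2) *\<^sub>R \<alpha> + cross3 \<alpha> \<beta>"
  define w where "w = p0 *\<^sub>R c + cross3 pv c"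
  have np: "p0\<^sup>2 + pv \<bullet> pv = 1" using quat_norm[of "a/2" "b/2" \<alpha> \<beta>] h(1,2) by (simp add: p0_def pv_def)
  have nw: "0\<^sup>2 + w \<bullet> w = 1" using quat_norm[of p0 0 pv c] h(3,7) np by (simp add: w_def pv_def)
  have prod: "mk (a/2) \<alpha> ** mk (b/2) \<beta> ** mk 0 c = mk 0 w"
    using h(7) by (simp add: mk_mult w_def p0_def pv_def)
  have tr: "trace (mk (a/2) \<alpha> ** mk (b/2) \<beta>) = complex_of_real x"
    "trace (mk (b/2) \<beta> ** mk 0 c) = complex_of_real y" "trace (mk 0 c ** mk (a/2) \<alpha>) = complex_of_real z"
    by (simp_all only: mk_mult trace_mk h(4-6)) (simp_all add: inner_commute)
  show ?L
    unfolding E_kappa_def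
    apply simp
    apply (rule bexI[of _ "mk (a/2) \<alpha>"], rule bexI[of _ "mk (b/2) \<beta>"], rule bexI[of _ "mk 0 c"],
           rule bexI[of _ "mk 0 (-w)"])
    using tr h prod nw mk_mat1[OF nw] h(1,2,3) mk_SU2[OF h(1)] mk_SU2[OF h(2)] mk_SU2[of 0 c] mk_SU2[of 0 "-w"]
    by (auto simp: trace_mk inner_commute)
qed



lemma gram3: "(c \<bullet> c) * ((\<alpha> \<bullet> \<alpha>) * (\<beta> \<bullet> \<beta>) - (\<alpha> \<bullet> \<beta>)\<^sup>2) =
   (\<beta> \<bullet> \<beta>) * (c \<bullet> \<alpha>)\<^sup>2 - 2 * (\<alpha> \<bullet> \<beta>) * (c \<bullet> \<alpha>) * (c \<bullet> \<beta>) + (\<alpha> \<bullet> \<alpha>) * (c \<bullet> \<beta>)\<^sup>2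
   + (c \<bullet> cross3 \<alpha> \<beta>)\<^sup>2"
  by (simp add: inner_vec_def sum_3 cross3_def power2_eq_square) algebra

lemma lagr: "(cross3 x y) \<bullet> (cross3 x y) = (x \<bullet> x) * (y \<bullet> y) - (x \<bullet> y)\<^sup>2"
  by (simp add: inner_vec_def sum_3 cross3_def power2_eq_square) algebra

lemma orth2: "\<exists>c::real^3. c \<bullet> c = 1 \<and> c \<bullet> u = 0 \<and> c \<bullet> v = 0"
proof -
  have "dim {u, v} \<le> card {u,v}" by (rule dim_le_card') simp
  also have "\<dots> \<le> 2" by (simp add: card_insert_le_m1)
  finally have d: "dim {u, v} < DIM(real^3)" by simp
  obtain w where w: "w \<noteq> 0" "\<And>y. y \<in> span {u, v} \<Longrightarrow> orthogonal w y"
    using orthogonal_to_subspace_exists[OF d] by blast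
  have "orthogonal w u" "orthogonal w v" using w(2) span_base[of u "{u,v}"] span_base[of v "{u,v}"] by auto
  then have o: "w \<bullet> u = 0" "w \<bullet> v = 0" by (auto simp: orthogonal_def)
  have nw: "w \<bullet> w > 0" using w(1) by simp
  show ?thesis
    apply (rule exI[of _ "(1 / norm w) *\<^sub>R w"])
    using o w(1) by (simp add: power2_norm_eq_inner[symmetric] power2_eq_square)
qed

definition NN :: "real \<Rightarrow> real \<Rightarrow> real \<Rightarrow> real" where
  "NN a b x = (1 - (a/2)\<^sup>2) * (1 - (b/2)\<^sup>2) - ((a/2)*(b/2) - x/2)\<^sup>2"

lemma nec:
  assumes "(x, y, z) \<in> E_kappa (a, b, 0, 0)"
  shows "y\<^sup>2 + z\<^sup>2 + x*y*z = 4 * NN a b x" "x\<^sup>2 \<le> 4" "NN a b x \<ge> 0"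
proof -
  obtain \<alpha> \<beta> c where h: "(a/2)\<^sup>2 + \<alpha> \<bullet> \<alpha> = 1" "(b/2)\<^sup>2 + \<beta> \<bullet> \<beta> = 1" "c \<bullet> c = 1"
     "x = 2*((a/2)*(b/2) - \<alpha> \<bullet> \<beta>)" "y = -2*(\<beta> \<bullet> c)" "z = -2*(c \<bullet> \<alpha>)"
     "((a/2) *\<^sub>R \<beta> + (b/2) *\<^sub>R \<alpha> + cross3 \<alpha> \<beta>) \<bullet> c = 0"
    using assms unfolding E_iff by blast
  have m: "c \<bullet> cross3 \<alpha> \<beta> = -((a/2) * (c \<bullet> \<beta>) + (b/2) * (c \<bullet> \<alpha>))"
  proof -
    have "((a/2) *\<^sub>R \<beta> + (b/2) *\<^sub>R \<alpha> + cross3 \<alpha> \<beta>) \<bullet> c = (a/2) * (c \<bullet> \<beta>) + (b/2) * (c \<bullet> \<alpha>) + c \<bullet> cross3 \<alpha> \<beta>"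
      by (simp add: inner_add_left inner_add_right inner_commute)
    then show ?thesis using h(7) by linarith
  qed
  have g: "(\<alpha> \<bullet> \<alpha>) * (\<beta> \<bullet> \<beta>) - (\<alpha> \<bullet> \<beta>)\<^sup>2 =
   (\<beta> \<bullet> \<beta>) * (c \<bullet> \<alpha>)\<^sup>2 - 2 * (\<alpha> \<bullet> \<beta>) * (c \<bullet> \<alpha>) * (c \<bullet> \<beta>) + (\<alpha> \<bullet> \<alpha>) * (c \<bullet> \<beta>)\<^sup>2
   + (c \<bullet> cross3 \<alpha> \<beta>)\<^sup>2" using gram3[of c \<alpha> \<beta>] h(3) by simp
  have aa: "\<alpha> \<bullet> \<alpha> = 1 - (a/2)\<^sup>2" and bb: "\<beta> \<bullet> \<beta> = 1 - (b/2)\<^sup>2" using h(1,2) by linarith+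
  have ab: "\<alpha> \<bullet> \<beta> = (a/2)*(b/2) - x/2" using h(4) by (simp add: field_simps)
  have cb: "c \<bullet> \<beta> = -y/2" and ca: "c \<bullet> \<alpha> = -z/2" using h(5,6) by (simp_all add: inner_commute)
  show "y\<^sup>2 + z\<^sup>2 + x*y*z = 4 * NN a b x"
    using g unfolding m aa bb ab cb ca NN_def by (simp add: field_simps power2_eq_square)
  show "NN a b x \<ge> 0" using lagr[of \<alpha> \<beta>] unfolding NN_def aa bb ab[symmetric]
    by (metis inner_ge_zero)
  define pv where "pv = (a / 2) *\<^sub>R \<beta> + (b / 2) *\<^sub>R \<alpha> + cross3 \<alpha> \<beta>"
  have xx: "x/2 = a / 2 * (b / 2) - \<alpha> \<bullet> \<beta>" using h(4) by simp
  have "(x/2)\<^sup>2 + pv \<bullet> pv = 1" using quat_norm[of "a/2" "b/2" \<alpha> \<beta>] h(1,2) unfolding xx pv_def by simp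
  moreover have "pv \<bullet> pv \<ge> 0" by simp
  ultimately have "(x/2)\<^sup>2 \<le> 1" by linarith
  then show "x\<^sup>2 \<le> 4" by (simp add: power_divide)
qed

lemma abs2: assumes "x\<^sup>2 < (4::real)" shows "\<bar>x\<bar> < 2"
proof (rule ccontr)
  assume "\<not> \<bar>x\<bar> < 2"
  then have "2 \<le> \<bar>x\<bar>" by simp
  then have "2 * 2 \<le> \<bar>x\<bar> * \<bar>x\<bar>" using mult_mono[of 2 "\<bar>x\<bar>" 2 "\<bar>x\<bar>"] by auto
  then show False using assms by (simp add: power2_eq_square)
qed

lemma suf1:
  assumes w: "(x, y0, z0) \<in> E_kappa (a, b, 0, 0)" and x: "x\<^sup>2 < 4"
    and q: "y\<^sup>2 + z\<^sup>2 + x*y*z = 4 * NN a b x"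
  shows "(x, y, z) \<in> E_kappa (a, b, 0, 0)"
proof -
  obtain \<alpha> \<beta> c0 where h: "(a/2)\<^sup>2 + \<alpha> \<bullet> \<alpha> = 1" "(b/2)\<^sup>2 + \<beta> \<bullet> \<beta> = 1" "c0 \<bullet> c0 = 1"
     "x = 2*((a/2)*(b/2) - \<alpha> \<bullet> \<beta>)" "y0 = -2*(\<beta> \<bullet> c0)" "z0 = -2*(c0 \<bullet> \<alpha>)"
     "((a/2) *\<^sub>R \<beta> + (b/2) *\<^sub>R \<alpha> + cross3 \<alpha> \<beta>) \<bullet> c0 = 0"
    using w unfolding E_iff by blast
  define a0 where "a0 = a/2"
  define b0 where "b0 = b/2"
  define AA where "AA = \<alpha> \<bullet> \<alpha>"
  define BB where "BB = \<beta> \<bullet> \<beta>"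
  define G where "G = \<alpha> \<bullet> \<beta>"
  define n where "n = cross3 \<alpha> \<beta>"
  define N where "N = NN a b x"
  define r where "r = -z/2"
  define s where "s = -y/2"
  have aa: "AA = 1 - a0\<^sup>2" and bb: "BB = 1 - b0\<^sup>2" using h(1,2) by (auto simp: AA_def BB_def a0_def b0_def)
  have ab: "G = a0*b0 - x/2" using h(4) by (simp add: G_def a0_def b0_def field_simps)
  have nn: "n \<bullet> n = N" unfolding n_def lagr N_def NN_def
    using aa bb ab by (simp add: AA_def BB_def G_def a0_def b0_def)
  have NAB: "N = AA * BB - G\<^sup>2" using nn lagr[of \<alpha> \<beta>] by (simp add: n_def AA_def BB_def G_def)
  have qrs: "BB * r\<^sup>2 - 2 * G * r * s + AA * s\<^sup>2 + (a0 * s + b0 * r)\<^sup>2 = N"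
  proof -
    have "r\<^sup>2 + s\<^sup>2 + x * r * s = N" using q unfolding r_def s_def N_def
      by (simp add: field_simps power2_eq_square)
    then show ?thesis unfolding aa bb ab by (simp add: field_simps power2_eq_square)
  qed
  have an: "\<alpha> \<bullet> n = 0" "\<beta> \<bullet> n = 0" "n \<bullet> \<alpha> = 0" "n \<bullet> \<beta> = 0"
    unfolding n_def using dot_cross_self by (auto simp: inner_commute)
  have "\<exists>c. c \<bullet> c = 1 \<and> c \<bullet> \<alpha> = r \<and> c \<bullet> \<beta> = s \<and> c \<bullet> n = -(a0 * s + b0 * r)"
  proof (cases "N = 0")
    case False
    define lam where "lam = (BB * r - G * s) / N"
    define mu where "mu = (AA * s - G * r) / N"
    define nu where "nu = -(a0 * s + b0 * r) / N"
    define c where "c = lam *\<^sub>R \<alpha> + mu *\<^sub>R \<beta> + nu *\<^sub>R n"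
    have ca: "c \<bullet> \<alpha> = r"
    proof -
      have "c \<bullet> \<alpha> = lam * AA + mu * G"
        by (simp add: c_def inner_add_left an AA_def G_def inner_commute[of \<beta> \<alpha>])
      also have "\<dots> = ((BB * r - G * s) * AA + (AA * s - G * r) * G) / N" using False
        by (simp add: lam_def mu_def field_simps)
      also have "(BB * r - G * s) * AA + (AA * s - G * r) * G = r * N" unfolding NAB
        by (simp add: algebra_simps power2_eq_square)
      also have "r * N / N = r" using False by simp
      finally show ?thesis .
    qed
    have cb: "c \<bullet> \<beta> = s"
    proof -
      have "c \<bullet> \<beta> = lam * G + mu * BB"
        by (simp add: c_def inner_add_left an BB_def G_def)
      also have "\<dots> = ((BB * r - G * s) * G + (AA * s - G * r) * BB) / N" using False
        by (simp add: lam_def mu_def field_simps)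
      also have "(BB * r - G * s) * G + (AA * s - G * r) * BB = s * N" unfolding NAB
        by (simp add: algebra_simps power2_eq_square)
      also have "s * N / N = s" using False by simp
      finally show ?thesis .
    qed
    have cn: "c \<bullet> n = -(a0 * s + b0 * r)"
      using False by (simp add: c_def inner_add_left an nn nu_def)
    have "c \<bullet> c = lam * (c \<bullet> \<alpha>) + mu * (c \<bullet> \<beta>) + nu * (c \<bullet> n)"
      by (simp add: c_def inner_add_right)
    also have "\<dots> = ((BB * r - G * s) * r + (AA * s - G * r) * s + (a0 * s + b0 * r)\<^sup>2) / N"
      unfolding ca cb cn lam_def mu_def nu_def using False
      by (simp add: field_simps power2_eq_square)
    also have "(BB * r - G * s) * r + (AA * s - G * r) * s + (a0 * s + b0 * r)\<^sup>2 = N"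
      using qrs by (simp add: algebra_simps power2_eq_square)
    also have "N / N = 1" using False by simp
    finally show ?thesis using ca cb cn by blast
  next
    case True
    have "(2 + x) * (y + z)\<^sup>2 + (2 - x) * (y - z)\<^sup>2 = 4 * (y\<^sup>2 + z\<^sup>2 + x*y*z)"
      by (simp add: field_simps power2_eq_square)
    also have "\<dots> = 0" using q True N_def by simp
    finally have e: "(2 + x) * (y + z)\<^sup>2 + (2 - x) * (y - z)\<^sup>2 = 0" .
    have "x < 2" "x > -2" using abs2[OF x] by auto
    then have "(2 + x) * (y + z)\<^sup>2 \<ge> 0" "(2 - x) * (y - z)\<^sup>2 \<ge> 0" by auto
    then have "(2 + x) * (y + z)\<^sup>2 = 0" "(2 - x) * (y - z)\<^sup>2 = 0" using e by linarith+
    then have "y + z = 0" "y - z = 0" using \<open>x < 2\<close> \<open>x > -2\<close> by auto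
    then have yz: "y = 0" "z = 0" by linarith+
    have n0: "n = 0" using nn True by simp
    obtain c where "c \<bullet> c = 1" "c \<bullet> \<alpha> = 0" "c \<bullet> \<beta> = 0" using orth2 by blast
    then show ?thesis using yz n0 by (auto simp: r_def s_def)
  qed
  then obtain c where c: "c \<bullet> c = 1" "c \<bullet> \<alpha> = r" "c \<bullet> \<beta> = s" "c \<bullet> n = -(a0 * s + b0 * r)" by blast
  have p: "((a/2) *\<^sub>R \<beta> + (b/2) *\<^sub>R \<alpha> + cross3 \<alpha> \<beta>) \<bullet> c = 0"
  proof -
    have "((a/2) *\<^sub>R \<beta> + (b/2) *\<^sub>R \<alpha> + cross3 \<alpha> \<beta>) \<bullet> c = a0 * (c \<bullet> \<beta>) + b0 * (c \<bullet> \<alpha>) + c \<bullet> n"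
      unfolding n_def a0_def b0_def by (simp add: inner_add_left inner_add_right inner_commute)
    then show ?thesis using c by simp
  qed
  show ?thesis unfolding E_iff
    apply (rule exI[of _ \<alpha>], rule exI[of _ \<beta>], rule exI[of _ c])
    using h c p by (simp add: r_def s_def inner_commute)
qed

lemma degen:
  assumes h: "(a/2)\<^sup>2 + \<alpha> \<bullet> \<alpha> = 1" "(b/2)\<^sup>2 + \<beta> \<bullet> \<beta> = 1"
     "x = 2*((a/2)*(b/2) - \<alpha> \<bullet> \<beta>)" and x: "x\<^sup>2 = 4"
  shows "\<beta> = -(x/2) *\<^sub>R \<alpha>" "b/2 = (x/2) * (a/2)"
proof -
  define e where "e = x/2"
  have e2: "e * e = 1" using x by (simp add: e_def power2_eq_square)
  have xe: "e = (a/2)*(b/2) - \<alpha> \<bullet> \<beta>" using h(3) by (simp add: e_def)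
  have "(b/2 - e * (a/2))\<^sup>2 + (\<beta> + e *\<^sub>R \<alpha>) \<bullet> (\<beta> + e *\<^sub>R \<alpha>)
      = ((b/2)\<^sup>2 + \<beta> \<bullet> \<beta>) + (e*e) * ((a/2)\<^sup>2 + \<alpha> \<bullet> \<alpha>) - 2 * e * ((a/2)*(b/2) - \<alpha> \<bullet> \<beta>)"
    by (simp add: inner_add_left inner_add_right inner_commute algebra_simps power2_eq_square)
  also have "\<dots> = 0" unfolding h(1,2) e2 xe[symmetric] using e2 by simp
  finally have z: "(b/2 - e * (a/2))\<^sup>2 + (\<beta> + e *\<^sub>R \<alpha>) \<bullet> (\<beta> + e *\<^sub>R \<alpha>) = 0" .
  have "(\<beta> + e *\<^sub>R \<alpha>) \<bullet> (\<beta> + e *\<^sub>R \<alpha>) \<ge> 0" "(b/2 - e * (a/2))\<^sup>2 \<ge> 0" by simp_all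
  then have "(\<beta> + e *\<^sub>R \<alpha>) \<bullet> (\<beta> + e *\<^sub>R \<alpha>) = 0" "(b/2 - e * (a/2))\<^sup>2 = 0" using z by linarith+
  then show "\<beta> = -(x/2) *\<^sub>R \<alpha>" "b/2 = (x/2) * (a/2)"
    by (simp_all add: e_def eq_neg_iff_add_eq_0)
qed

definition rho :: "real \<Rightarrow> real" where "rho a = sqrt (1 - (a/2)\<^sup>2)"

lemma nec2:
  assumes "(x, y, z) \<in> E_kappa (a, b, 0, 0)" and x: "x\<^sup>2 = 4"
  shows "\<exists>t. y = -(x/2) * (2 * rho a) * cos t \<and> z = 2 * rho a * cos t"
proof -
  obtain \<alpha> \<beta> c where h: "(a/2)\<^sup>2 + \<alpha> \<bullet> \<alpha> = 1" "(b/2)\<^sup>2 + \<beta> \<bullet> \<beta> = 1" "c \<bullet> c = 1"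
     "x = 2*((a/2)*(b/2) - \<alpha> \<bullet> \<beta>)" "y = -2*(\<beta> \<bullet> c)" "z = -2*(c \<bullet> \<alpha>)"
     "((a/2) *\<^sub>R \<beta> + (b/2) *\<^sub>R \<alpha> + cross3 \<alpha> \<beta>) \<bullet> c = 0"
    using assms unfolding E_iff by blast
  have be: "\<beta> = -(x/2) *\<^sub>R \<alpha>" using degen[OF h(1,2,4) x] by simp
  define w where "w = c \<bullet> \<alpha>"
  have y: "y = x * w" and z: "z = -2 * w" using h(5,6) be by (simp_all add: w_def inner_commute)
  have aa: "\<alpha> \<bullet> \<alpha> = 1 - (a/2)\<^sup>2" using h(1) by simp
  have a1: "(a/2)\<^sup>2 \<le> 1" using aa inner_ge_zero[of \<alpha>] by linarith
  have rr: "(rho a)\<^sup>2 = \<alpha> \<bullet> \<alpha>" unfolding rho_def aa using a1 by simp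
  have r0: "rho a \<ge> 0" unfolding rho_def using a1 by simp
  have cs: "w\<^sup>2 \<le> (rho a)\<^sup>2" using Cauchy_Schwarz_ineq[of c \<alpha>] h(3) rr by (simp add: w_def)
  show ?thesis
  proof (cases "rho a = 0")
    case True
    then have "w = 0" using cs by simp
    then show ?thesis using y z True by simp
  next
    case False
    then have rp: "rho a > 0" using r0 by simp
    have "\<bar>w\<bar> \<le> rho a" using power2_le_imp_le[of "\<bar>w\<bar>" "rho a"] cs r0 by simp
    then have "\<bar>- w / rho a\<bar> \<le> 1" using rp by simp
    then have ct: "cos (arccos (- w / rho a)) = - w / rho a" by (rule cos_arccos_abs)
    show ?thesis
      apply (rule exI[of _ "arccos (- w / rho a)"])
      unfolding ct using rp y z by (simp add: field_simps)
  qed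
qed

lemma suf2:
  assumes w: "(x, y0, z0) \<in> E_kappa (a, b, 0, 0)" and x: "x\<^sup>2 = 4"
  shows "(x, -(x/2) * (2 * rho a) * cos t, 2 * rho a * cos t) \<in> E_kappa (a, b, 0, 0)"
proof -
  obtain \<alpha> \<beta> c0 where h: "(a/2)\<^sup>2 + \<alpha> \<bullet> \<alpha> = 1" "(b/2)\<^sup>2 + \<beta> \<bullet> \<beta> = 1" "c0 \<bullet> c0 = 1"
     "x = 2*((a/2)*(b/2) - \<alpha> \<bullet> \<beta>)" "y0 = -2*(\<beta> \<bullet> c0)" "z0 = -2*(c0 \<bullet> \<alpha>)"
     "((a/2) *\<^sub>R \<beta> + (b/2) *\<^sub>R \<alpha> + cross3 \<alpha> \<beta>) \<bullet> c0 = 0"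
    using w unfolding E_iff by blast
  have be: "\<beta> = -(x/2) *\<^sub>R \<alpha>" and b: "b/2 = (x/2) * (a/2)" using degen[OF h(1,2,4) x] by simp_all
  have aa: "\<alpha> \<bullet> \<alpha> = 1 - (a/2)\<^sup>2" using h(1) by simp
  have a1: "(a/2)\<^sup>2 \<le> 1" using aa inner_ge_zero[of \<alpha>] by linarith
  have rr: "(rho a)\<^sup>2 = \<alpha> \<bullet> \<alpha>" unfolding rho_def aa using a1 by simp
  have r0: "rho a \<ge> 0" unfolding rho_def using a1 by simp
  have "\<exists>c. c \<bullet> c = 1 \<and> c \<bullet> \<alpha> = - rho a * cos t"
  proof (cases "rho a = 0")
    case True
    obtain c where "c \<bullet> c = 1" "c \<bullet> \<alpha> = 0" "c \<bullet> \<alpha> = 0" using orth2 by blast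
    then show ?thesis using True by auto
  next
    case False
    obtain u where u: "u \<bullet> u = 1" "u \<bullet> \<alpha> = 0" "u \<bullet> \<alpha> = 0" using orth2 by blast
    define c where "c = (- cos t / rho a) *\<^sub>R \<alpha> + sin t *\<^sub>R u"
    have "c \<bullet> \<alpha> = - cos t / rho a * (\<alpha> \<bullet> \<alpha>)" using u by (simp add: c_def inner_add_left inner_diff_left)
    also have "\<dots> = - rho a * cos t" using False unfolding rr[symmetric] by (simp add: power2_eq_square)
    finally have ca: "c \<bullet> \<alpha> = - rho a * cos t" .
    have "c \<bullet> c = (- cos t / rho a) * (c \<bullet> \<alpha>) + sin t * (c \<bullet> u)" by (subst (2) c_def) (simp only: inner_add_right inner_scaleR_right)
    also have "c \<bullet> u = sin t"
    proof -
      have "c \<bullet> u = (- cos t / rho a) * (\<alpha> \<bullet> u) + sin t * (u \<bullet> u)"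
        by (simp only: c_def inner_add_left inner_scaleR_left)
      then show ?thesis using u by (simp add: inner_commute)
    qed
    also have "(- cos t / rho a) * (c \<bullet> \<alpha>) + sin t * sin t = (cos t)\<^sup>2 + (sin t)\<^sup>2"
      unfolding ca using False by (simp add: power2_eq_square)
    finally have "c \<bullet> c = 1" by simp
    then show ?thesis using ca by blast
  qed
  then obtain c where c: "c \<bullet> c = 1" "c \<bullet> \<alpha> = - rho a * cos t" by blast
  have p: "((a/2) *\<^sub>R \<beta> + (b/2) *\<^sub>R \<alpha> + cross3 \<alpha> \<beta>) = 0"
  proof -
    have c0: "cross3 \<alpha> \<beta> = 0" unfolding be by (simp only: cross_mult_right cross_refl scaleR_zero_right)
    have "(a/2) *\<^sub>R \<beta> + (b/2) *\<^sub>R \<alpha> = ((a/2) * (-(x/2)) + (x/2) * (a/2)) *\<^sub>R \<alpha>"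
      unfolding be b by (simp only: scaleR_scaleR scaleR_add_left)
    also have "\<dots> = 0" by simp
    finally show ?thesis using c0 by simp
  qed
  show ?thesis unfolding E_iff
    apply (rule exI[of _ \<alpha>], rule exI[of _ \<beta>], rule exI[of _ c])
  proof (intro conjI)
    show "(a/2)\<^sup>2 + \<alpha> \<bullet> \<alpha> = 1" "(b/2)\<^sup>2 + \<beta> \<bullet> \<beta> = 1" "c \<bullet> c = 1"
      "x = 2*((a/2)*(b/2) - \<alpha> \<bullet> \<beta>)" using h c by auto
    show "((a/2) *\<^sub>R \<beta> + (b/2) *\<^sub>R \<alpha> + cross3 \<alpha> \<beta>) \<bullet> c = 0" using p by simp
    show "2 * rho a * cos t = -2 * (c \<bullet> \<alpha>)" using c by simp
    have "\<beta> \<bullet> c = -(x/2) * (c \<bullet> \<alpha>)" unfolding be by (simp add: inner_commute)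
    then show "-(x/2) * (2 * rho a) * cos t = -2 * (\<beta> \<bullet> c)" using c by simp
  qed
qed

lemma pd0: assumes "x\<^sup>2 < 4" "y\<^sup>2 + z\<^sup>2 + x*y*z = (0::real)" shows "y = 0" "z = 0"
proof -
  have "(2 + x) * (y + z)\<^sup>2 + (2 - x) * (y - z)\<^sup>2 = 4 * (y\<^sup>2 + z\<^sup>2 + x*y*z)"
    by (simp add: field_simps power2_eq_square)
  also have "\<dots> = 0" using assms(2) by simp
  finally have e: "(2 + x) * (y + z)\<^sup>2 + (2 - x) * (y - z)\<^sup>2 = 0" .
  have "x < 2" "x > -2" using abs2[OF assms(1)] by auto
  then have "(2 + x) * (y + z)\<^sup>2 \<ge> 0" "(2 - x) * (y - z)\<^sup>2 \<ge> 0" by auto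
  then have "(2 + x) * (y + z)\<^sup>2 = 0" "(2 - x) * (y - z)\<^sup>2 = 0" using e by linarith+
  then have "y + z = 0" "y - z = 0" using \<open>x < 2\<close> \<open>x > -2\<close> by auto
  then show "y = 0" "z = 0" by linarith+
qed



lemma quadric_ellipse:
  assumes x: "x\<^sup>2 < 4" and N: "N \<ge> 0"
  shows "{p :: real \<times> real \<times> real. fst p = x \<and> (fst (snd p))\<^sup>2 + (snd (snd p))\<^sup>2 + x * fst (snd p) * snd (snd p) = 4 * N}
    = (\<lambda>t. (x, 0, 0) + cos t *\<^sub>R (0, sqrt (4*N/(2+x)), sqrt (4*N/(2+x)))
                    + sin t *\<^sub>R (0, sqrt (4*N/(2-x)), - sqrt (4*N/(2-x)))) ` UNIV"
    (is "?Q = ?E")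
proof -
  define P where "P = sqrt (4*N/(2+x))"
  define R where "R = sqrt (4*N/(2-x))"
  have x2: "x < 2" "x > -2" using abs2[OF x] by auto
  have P2: "P\<^sup>2 = 4*N/(2+x)" unfolding P_def using N x2 by simp
  have R2: "R\<^sup>2 = 4*N/(2-x)" unfolding R_def using N x2 by simp
  have P2': "(2+x) * P\<^sup>2 = 4*N" using P2 x2 by simp
  have R2': "(2-x) * R\<^sup>2 = 4*N" using R2 x2 by simp
  have E: "?E = (\<lambda>t. (x, P * cos t + R * sin t, P * cos t - R * sin t)) ` UNIV"
    unfolding P_def[symmetric] R_def[symmetric] by (auto simp: algebra_simps)
  show ?thesis unfolding E
  proof (intro equalityI subsetI)
    fix p assume "p \<in> ?Q"
    then obtain y z where p: "p = (x, y, z)" and q: "y\<^sup>2 + z\<^sup>2 + x*y*z = 4*N"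
      by (cases p) auto
    show "p \<in> (\<lambda>t. (x, P * cos t + R * sin t, P * cos t - R * sin t)) ` UNIV"
    proof (cases "N = 0")
      case True
      have q0: "y\<^sup>2 + z\<^sup>2 + x*y*z = 0" using q True by simp
      have "y = 0" "z = 0" using pd0[OF x q0] by auto
      moreover have "P = 0" "R = 0" using True by (simp_all add: P_def R_def)
      ultimately show ?thesis unfolding p by (auto intro: image_eqI[of _ _ 0])
    next
      case False
      then have Np: "N > 0" using N by simp
      have Pp: "P > 0" unfolding P_def using Np x2 by simp
      have Rp: "R > 0" unfolding R_def using Np x2 by simp
      define C where "C = (y+z)/(2*P)"
      define S where "S = (y-z)/(2*R)"
      have "C\<^sup>2 + S\<^sup>2 = ((2+x)*(y+z)\<^sup>2 + (2-x)*(y-z)\<^sup>2) / (16 * N)"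
      proof -
        have C2: "C\<^sup>2 = (2+x)*(y+z)\<^sup>2/(16*N)"
          unfolding C_def power_divide power_mult_distrib P2 using Np x2 by (simp add: field_simps)
        have S2: "S\<^sup>2 = (2-x)*(y-z)\<^sup>2/(16*N)"
          unfolding S_def power_divide power_mult_distrib R2 using Np x2 by (simp add: field_simps)
        show ?thesis unfolding C2 S2 by (simp add: add_divide_distrib)
      qed
      also have "(2+x)*(y+z)\<^sup>2 + (2-x)*(y-z)\<^sup>2 = 4 * (y\<^sup>2 + z\<^sup>2 + x*y*z)"
        by (simp add: field_simps power2_eq_square)
      also have "\<dots> = 16 * N" using q by simp
      finally have "C\<^sup>2 + S\<^sup>2 = 1" using Np by simp
      then obtain t where t: "C = cos t" "S = sin t" using sincos_total_2pi by metis
      have "y = P * cos t + R * sin t" "z = P * cos t - R * sin t"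
        unfolding t[symmetric] C_def S_def using Pp Rp by (simp_all add: field_simps)
      then show ?thesis unfolding p by auto
    qed
  next
    fix p assume "p \<in> (\<lambda>t. (x, P * cos t + R * sin t, P * cos t - R * sin t)) ` UNIV"
    then obtain t where p: "p = (x, P * cos t + R * sin t, P * cos t - R * sin t)" by auto
    have "(P * cos t + R * sin t)\<^sup>2 + (P * cos t - R * sin t)\<^sup>2 + x * (P * cos t + R * sin t) * (P * cos t - R * sin t)
       = ((2+x) * P\<^sup>2) * (cos t)\<^sup>2 + ((2-x) * R\<^sup>2) * (sin t)\<^sup>2"
      by (simp add: field_simps power2_eq_square)
    also have "\<dots> = 4 * N * ((cos t)\<^sup>2 + (sin t)\<^sup>2)" unfolding P2' R2' by (simp only: distrib_left)
    also have "\<dots> = 4 * N" by simp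
    finally show "p \<in> ?Q" unfolding p by simp
  qed
qed



lemma main_x:
  assumes ne: "X_level (a, b, 0, 0) x \<noteq> {}"
  shows "ellipse_centered (X_level (a, b, 0, 0) x) (x, 0, 0) \<and>
         Y_level (a, b, 0, 0) 0 \<inter> X_level (a, b, 0, 0) x \<noteq> {} \<and>
         Z_level (a, b, 0, 0) 0 \<inter> X_level (a, b, 0, 0) x \<noteq> {}"
proof -
  obtain p where "p \<in> X_level (a, b, 0, 0) x" using ne by blast
  then obtain y0 z0 where w: "(x, y0, z0) \<in> E_kappa (a, b, 0, 0)"
    unfolding X_level_def by (cases p) auto
  have x4: "x\<^sup>2 \<le> 4" and N0: "NN a b x \<ge> 0" using nec[OF w] by auto
  show ?thesis
  proof (cases "x\<^sup>2 < 4")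
    case True
    have XQ: "X_level (a, b, 0, 0) x = {p :: real \<times> real \<times> real. fst p = x \<and> (fst (snd p))\<^sup>2 + (snd (snd p))\<^sup>2 + x * fst (snd p) * snd (snd p) = 4 * NN a b x}"
    proof (intro equalityI subsetI)
      fix p assume "p \<in> X_level (a, b, 0, 0) x"
      then obtain y z where p: "p = (x, y, z)" and e: "(x, y, z) \<in> E_kappa (a, b, 0, 0)"
        unfolding X_level_def by (cases p) auto
      show "p \<in> {p :: real \<times> real \<times> real. fst p = x \<and> (fst (snd p))\<^sup>2 + (snd (snd p))\<^sup>2 + x * fst (snd p) * snd (snd p) = 4 * NN a b x}"
        using nec(1)[OF e] p by simp
    next
      fix p assume "p \<in> {p :: real \<times> real \<times> real. fst p = x \<and> (fst (snd p))\<^sup>2 + (snd (snd p))\<^sup>2 + x * fst (snd p) * snd (snd p) = 4 * NN a b x}"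
      then obtain y z where p: "p = (x, y, z)" and q: "y\<^sup>2 + z\<^sup>2 + x*y*z = 4 * NN a b x"
        by (cases p) simp
      show "p \<in> X_level (a, b, 0, 0) x"
        using suf1[OF w True q] p unfolding X_level_def by simp
    qed
    have ell: "ellipse_centered (X_level (a, b, 0, 0) x) (x, 0, 0)"
      unfolding ellipse_centered_def XQ quadric_ellipse[OF True N0] by blast
    define s where "s = 2 * sqrt (NN a b x)"
    have s2: "s\<^sup>2 = 4 * NN a b x" unfolding s_def using N0 by (simp add: power_mult_distrib)
    have p1: "(x, 0, s) \<in> X_level (a, b, 0, 0) x" unfolding XQ using s2 by simp
    have p2: "(x, s, 0) \<in> X_level (a, b, 0, 0) x" unfolding XQ using s2 by simp
    have "(x, 0, s) \<in> Y_level (a, b, 0, 0) 0" using p1 unfolding X_level_def Y_level_def by simp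
    moreover have "(x, s, 0) \<in> Z_level (a, b, 0, 0) 0" using p2 unfolding X_level_def Z_level_def by simp
    ultimately show ?thesis using ell p1 p2 by blast
  next
    case False
    then have x2: "x\<^sup>2 = 4" using x4 by simp
    define u where "u = ((0::real), -(x/2) * (2 * rho a), 2 * rho a)"
    have XE: "X_level (a, b, 0, 0) x = (\<lambda>t. (x, 0, 0) + cos t *\<^sub>R u + sin t *\<^sub>R (0::real \<times> real \<times> real)) ` UNIV"
    proof (intro equalityI subsetI)
      fix p assume "p \<in> X_level (a, b, 0, 0) x"
      then obtain y z where p: "p = (x, y, z)" and e: "(x, y, z) \<in> E_kappa (a, b, 0, 0)"
        unfolding X_level_def by (cases p) auto
      obtain t where t: "y = -(x/2) * (2 * rho a) * cos t" "z = 2 * rho a * cos t"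
        using nec2[OF e x2] by blast
      show "p \<in> (\<lambda>t. (x, 0, 0) + cos t *\<^sub>R u + sin t *\<^sub>R (0::real \<times> real \<times> real)) ` UNIV"
        apply (rule image_eqI[of _ _ t])
        using p t by (simp_all add: u_def)
    next
      fix p assume "p \<in> (\<lambda>t. (x, 0, 0) + cos t *\<^sub>R u + sin t *\<^sub>R (0::real \<times> real \<times> real)) ` UNIV"
      then obtain t where p: "p = (x, 0, 0) + cos t *\<^sub>R u + sin t *\<^sub>R (0::real \<times> real \<times> real)" by blast
      have "p = (x, -(x/2) * (2 * rho a) * cos t, 2 * rho a * cos t)" unfolding p u_def by simp
      then show "p \<in> X_level (a, b, 0, 0) x"
        using suf2[OF w x2, of t] unfolding X_level_def by simp
    qed
    have ell: "ellipse_centered (X_level (a, b, 0, 0) x) (x, 0, 0)"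
      unfolding ellipse_centered_def XE by blast
    have "(x, -(x/2) * (2 * rho a) * cos (pi/2), 2 * rho a * cos (pi/2)) \<in> E_kappa (a, b, 0, 0)"
      by (rule suf2[OF w x2])
    then have p0: "(x, 0, 0) \<in> E_kappa (a, b, 0, 0)" by simp
    have "(x, 0, 0) \<in> Y_level (a, b, 0, 0) 0 \<inter> X_level (a, b, 0, 0) x"
         "(x, 0, 0) \<in> Z_level (a, b, 0, 0) 0 \<inter> X_level (a, b, 0, 0) x"
      using p0 unfolding X_level_def Y_level_def Z_level_def by auto
    then show ?thesis using ell by blast
  qed
qed

theorem lemma6p3:
  fixes a b :: real
  assumes "a \<in> {-2..2}" and "b \<in> {-2..2}"
  shows "(\<forall>x. X_level (a, b, 0, 0) x \<noteq> {} \<longrightarrow>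
            ellipse_centered (X_level (a, b, 0, 0) x) (x, 0, 0))
       \<and> (\<forall>x. X_level (a, b, 0, 0) x \<noteq> {} \<longrightarrow>
            Y_level (a, b, 0, 0) 0 \<inter> X_level (a, b, 0, 0) x \<noteq> {} \<and>
            Z_level (a, b, 0, 0) 0 \<inter> X_level (a, b, 0, 0) x \<noteq> {})"
  using main_x by blast

end
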